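(* Fix $\delta\in[0,1/2]$. Alice flips two independent coins $c_1,c_2\in\{0,1\}$ with $\Pr[c_1=0]=\Pr[c_2=0]=\tfrac12+\delta$. Bob, without knowledge of $c_1,c_2$, sends Alice a classical bit $b$ and a single-qubit state $\rho$ (where $b$ may be chosen at random with probabilities $q_0,q_1$ and the state $\rho_b$ may depend on $b$). Alice measures $\rho$ in the computational basis $\{|0\rangle,|1\rangle\}$ if $c_1=0$ and in the Hadamard basis $\{|+\rangle,|-\rangle\}$ if $c_1=1$, obtaining $a\in\{0,1\}$. Bob wins if $a=b$ when $c_2=0$, and $a\ne b$ when $c_2=1$. Then Bob's maximal winning probability over all strategies is $$\frac12+\delta\sqrt{\frac{1+4\delta^2}{2}},$$ achieved by the deterministic strategy $b=0$ with $\rho=\tfrac12(I+r_x\sigma_x+r_z\sigma_z)$, $r_x=\frac{1-2\delta}{\sqrt{2+8\delta^2}}$, $r_z=\frac{1+2\delta}{\sqrt{2+8\delta^2}}$. In particular the value is $1/2$ for $\delta=0$ and $1$ for $\delta=1/2$.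
   Context: $|\pm\rangle=\tfrac{1}{\sqrt2}(|0\rangle\pm|1\rangle)$; measurement outcome $0$ corresponds to $|0\rangle$ or $|+\rangle$ and $1$ to $|1\rangle$ or $|-\rangle$; $\sigma_x,\sigma_z$ are Pauli matrices. *)

theory Defs
  imports "HOL-Analysis.Analysis"
begin

text \<open>Single-qubit operators are 2x2 complex matrices, indexed by the type 2
  (index 1 = |0>, index 2 = |1>). Bits are naturals 0/1.\<close>

type_synonym qmat = "complex^2^2"
type_synonym qvec = "complex^2"

definition expval :: "qmat \<Rightarrow> qvec \<Rightarrow> complex" where
  "expval \<rho> \<psi> = (\<Sum>i\<in>UNIV. cnj (\<psi> $ i) * ((\<rho> *v \<psi>) $ i))"

definition trace2 :: "qmat \<Rightarrow> complex" where
  "trace2 \<rho> = (\<Sum>i\<in>UNIV. \<rho> $ i $ i)"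

definition density :: "qmat \<Rightarrow> bool" where
  "density \<rho> \<longleftrightarrow>
     (\<forall>i j. \<rho> $ i $ j = cnj (\<rho> $ j $ i)) \<and>
     (\<forall>v. Im (expval \<rho> v) = 0 \<and> Re (expval \<rho> v) \<ge> 0) \<and>
     trace2 \<rho> = 1"

definition ket0 :: qvec where "ket0 = (\<chi> i. if i = 1 then 1 else 0)"
definition ket1 :: qvec where "ket1 = (\<chi> i. if i = 1 then 0 else 1)"
definition ketp :: qvec where
  "ketp = (\<chi> i. complex_of_real (1 / sqrt 2))"
definition ketm :: qvec where
  "ketm = (\<chi> i. if i = 1 then complex_of_real (1 / sqrt 2) else - complex_of_real (1 / sqrt 2))"

definition meas_vec :: "nat \<Rightarrow> nat \<Rightarrow> qvec" where
  "meas_vec c1 a = (if c1 = 0 then (if a = 0 then ket0 else ket1)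
                    else (if a = 0 then ketp else ketm))"

definition prob_outcome :: "qmat \<Rightarrow> nat \<Rightarrow> nat \<Rightarrow> real" where
  "prob_outcome \<rho> c1 a = Re (expval \<rho> (meas_vec c1 a))"

definition coin :: "real \<Rightarrow> nat \<Rightarrow> real" where
  "coin \<delta> c = (if c = 0 then 1/2 + \<delta> else 1/2 - \<delta>)"

definition win_prob :: "real \<Rightarrow> (nat \<Rightarrow> real) \<Rightarrow> (nat \<Rightarrow> qmat) \<Rightarrow> real" where
  "win_prob \<delta> q \<rho> =
     (\<Sum>b\<in>{0,1::nat}. q b * (\<Sum>c1\<in>{0,1::nat}. \<Sum>c2\<in>{0,1::nat}.
        coin \<delta> c1 * coin \<delta> c2 *
        prob_outcome (\<rho> b) c1 (if c2 = 0 then b else 1 - b)))"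

definition sigma_x :: qmat where
  "sigma_x = (\<chi> i j. if i = j then 0 else 1)"
definition sigma_z :: qmat where
  "sigma_z = (\<chi> i j. if i = j then (if i = 1 then 1 else -1) else 0)"
definition id2 :: qmat where
  "id2 = (\<chi> i j. if i = j then 1 else 0)"

definition rho_bloch :: "real \<Rightarrow> real \<Rightarrow> qmat" where
  "rho_bloch rx rz = (\<chi> i j. (1/2) * (id2 $ i $ j + complex_of_real rx * sigma_x $ i $ j
                                        + complex_of_real rz * sigma_z $ i $ j))"

definition opt_value :: "real \<Rightarrow> real" where
  "opt_value \<delta> = 1/2 + \<delta> * sqrt ((1 + 4 * \<delta>^2) / 2)"

end

theory Submission imports Defs begin

lemma expval2: "expval \<rho> v = cnj (v$1) * (\<rho>$1$1 * v$1 + \<rho>$1$2 * v$2) + cnj (v$2) * (\<rho>$2$1 * v$1 + \<rho>$2$2 * v$2)"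
  unfolding expval_def by (simp add: sum_2 matrix_vector_mult_def)

lemma tr2: "trace2 \<rho> = \<rho>$1$1 + \<rho>$2$2" unfolding trace2_def by (simp add: sum_2)

lemma two_ne: "(1::2) \<noteq> 2" by simp

definition rv :: "real \<Rightarrow> real \<Rightarrow> qvec" where "rv s1 u1 = (\<chi> i. if i = 1 then complex_of_real s1 else complex_of_real u1)"

lemma re_expval_rv: "Re (expval \<rho> (rv s1 u1)) = s1^2 * Re (\<rho>$1$1) + u1^2 * Re(\<rho>$2$2) + s1*u1*(Re (\<rho>$1$2) + Re (\<rho>$2$1))"
  unfolding expval2 rv_def by (simp add: power2_eq_square algebra_simps)

lemma probs:
  "prob_outcome \<rho> 0 0 = Re (\<rho>$1$1)"
  "prob_outcome \<rho> 0 1 = Re (\<rho>$2$2)"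
  "prob_outcome \<rho> 1 0 = (Re (\<rho>$1$1) + Re (\<rho>$2$2) + Re (\<rho>$1$2) + Re (\<rho>$2$1))/2"
  "prob_outcome \<rho> 1 1 = (Re (\<rho>$1$1) + Re (\<rho>$2$2) - Re (\<rho>$1$2) - Re (\<rho>$2$1))/2"
  unfolding prob_outcome_def meas_vec_def expval2 ket0_def ket1_def ketp_def ketm_def
  apply (simp_all add: algebra_simps)
  done



lemma dens_facts:
  assumes "density \<rho>"
  shows "Re (\<rho>$1$1) + Re (\<rho>$2$2) = 1" "Re (\<rho>$2$1) = Re (\<rho>$1$2)"
    "s1^2 * Re (\<rho>$1$1) + u1^2 * Re(\<rho>$2$2) + 2 * s1 * u1 * Re (\<rho>$1$2) \<ge> 0"
proof -
  have h: "\<forall>i j. \<rho> $ i $ j = cnj (\<rho> $ j $ i)" "\<forall>v. Re (expval \<rho> v) \<ge> 0" "trace2 \<rho> = 1"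
    using assms unfolding density_def by blast+
  show "Re (\<rho>$1$1) + Re (\<rho>$2$2) = 1" using arg_cong[OF h(3), of Re] by (simp add: tr2)
  show e: "Re (\<rho>$2$1) = Re (\<rho>$1$2)" proof -
    have "\<rho> $ 2 $ 1 = cnj (\<rho> $ 1 $ 2)" using h(1) by blast
    then show ?thesis by simp
  qed
  have "Re (expval \<rho> (rv s1 u1)) \<ge> 0" using h(2) by blast
  then show "s1^2 * Re (\<rho>$1$1) + u1^2 * Re(\<rho>$2$2) + 2 * s1 * u1 * Re (\<rho>$1$2) \<ge> 0"
    unfolding re_expval_rv e by (simp add: algebra_simps)
qed

lemma key_bound:
  fixes p r a d x S :: real
  assumes p: "p > 0" and S: "S = sqrt (p^2 + r^2)" and ad: "a + d = 1"
    and psd: "\<And>s1 u1. s1^2 * a + u1^2 * d + 2 * s1 * u1 * x \<ge> 0"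
  shows "p*(a-d) + 2*r*x \<le> S" "- S \<le> p*(a-d) + 2*r*x"
proof -
  have S0: "S \<ge> 0" using S by simp
  have SS: "S^2 = p^2 + r^2" using S by simp
  have Sp: "S + p > 0" using S0 p by simp
  have 1: "r^2 * a + (-(p+S))^2 * d + 2*r*(-(p+S))*x \<ge> 0" by (rule psd)
  have "r^2 * a + (-(p+S))^2 * d + 2*r*(-(p+S))*x - (S+p)*(S*(a+d) - p*(a-d) - 2*r*x)
      = (r^2 + p^2 - S^2) * a" by (simp add: algebra_simps power2_eq_square)
  then have "r^2 * a + (-(p+S))^2 * d + 2*r*(-(p+S))*x = (S+p)*(S*(a+d) - p*(a-d) - 2*r*x)"
    using SS by simp
  with 1 ad have "(S+p)*(S - p*(a-d) - 2*r*x) \<ge> 0" by simp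
  then have "S - p*(a-d) - 2*r*x \<ge> 0" using Sp by (simp add: zero_le_mult_iff)
  then show "p*(a-d) + 2*r*x \<le> S" by linarith
  have 2: "(p+S)^2 * a + r^2 * d + 2*(p+S)*r*x \<ge> 0" by (rule psd)
  have "(p+S)^2 * a + r^2 * d + 2*(p+S)*r*x - (S+p)*(S*(a+d) + p*(a-d) + 2*r*x)
      = (r^2 + p^2 - S^2) * d" by (simp add: algebra_simps power2_eq_square)
  then have "(p+S)^2 * a + r^2 * d + 2*(p+S)*r*x = (S+p)*(S*(a+d) + p*(a-d) + 2*r*x)"
    using SS by simp
  with 2 ad have "(S+p)*(S + p*(a-d) + 2*r*x) \<ge> 0" by simp
  then have "S + p*(a-d) + 2*r*x \<ge> 0" using Sp by (simp add: zero_le_mult_iff)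
  then show "- S \<le> p*(a-d) + 2*r*x" by linarith
qed

lemma win_expand:
  "win_prob \<delta> q \<rho> =
    q 0 * ((1/2+\<delta>)*((1/2+\<delta>)*prob_outcome (\<rho> 0) 0 0 + (1/2-\<delta>)*prob_outcome (\<rho> 0) 0 1)
      + (1/2-\<delta>)*((1/2+\<delta>)*prob_outcome (\<rho> 0) 1 0 + (1/2-\<delta>)*prob_outcome (\<rho> 0) 1 1))
  + q 1 * ((1/2+\<delta>)*((1/2+\<delta>)*prob_outcome (\<rho> 1) 0 1 + (1/2-\<delta>)*prob_outcome (\<rho> 1) 0 0)
      + (1/2-\<delta>)*((1/2+\<delta>)*prob_outcome (\<rho> 1) 1 1 + (1/2-\<delta>)*prob_outcome (\<rho> 1) 1 0))"
  unfolding win_prob_def coin_def by (simp add: algebra_simps)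

lemma quad_nonneg:
  fixes A B C x y :: real
  assumes "A \<ge> 0" "C \<ge> 0" "B^2 \<le> A * C"
  shows "A * x^2 + C * y^2 + 2 * B * x * y \<ge> 0"
proof (cases "A = 0")
  case True
  then have "B^2 \<le> 0" using assms by simp
  then have "B = 0" by simp
  then show ?thesis using True assms by simp
next
  case False
  then have Ap: "A > 0" using assms by simp
  have "A * (A * x^2 + C * y^2 + 2 * B * x * y) = (A*x + B*y)^2 + (A*C - B^2) * y^2"
    by (simp add: algebra_simps power2_eq_square)
  also have "\<dots> \<ge> 0" using assms by simp
  finally show ?thesis using Ap by (simp add: zero_le_mult_iff)
qed

lemma bloch_entries:
  "rho_bloch rx rz $ 1 $ 1 = complex_of_real ((1 + rz)/2)"
  "rho_bloch rx rz $ 1 $ 2 = complex_of_real (rx/2)"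
  "rho_bloch rx rz $ 2 $ 1 = complex_of_real (rx/2)"
  "rho_bloch rx rz $ 2 $ 2 = complex_of_real ((1 - rz)/2)"
  unfolding rho_bloch_def sigma_x_def sigma_z_def id2_def by (simp_all add: field_simps)

lemma bloch_density:
  fixes rx rz :: real
  assumes "rx^2 + rz^2 = 1"
  shows "density (rho_bloch rx rz)"
proof -
  have rz1: "rz^2 \<le> 1" "rx^2 \<le> 1" using assms by (smt (verit) zero_le_power2)+
  have rzb: "-1 \<le> rz \<and> rz \<le> 1" using rz1(1) abs_square_le_1[of rz] by auto
  have herm: "\<forall>i j. rho_bloch rx rz $ i $ j = cnj (rho_bloch rx rz $ j $ i)"
  proof (intro allI)
    fix i j :: 2
    show "rho_bloch rx rz $ i $ j = cnj (rho_bloch rx rz $ j $ i)"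
      using exhaust_2[of i] exhaust_2[of j] by (auto simp: bloch_entries)
  qed
  have pos: "Im (expval (rho_bloch rx rz) v) = 0 \<and> Re (expval (rho_bloch rx rz) v) \<ge> 0" for v
  proof -
    define s1 t u1 w where "s1 = Re (v$1)" "t = Im (v$1)" "u1 = Re (v$2)" "w = Im (v$2)"
    have v1: "v$1 = Complex s1 t" and v2: "v$2 = Complex u1 w" using s1_t_u1_w_def by (simp_all add: complex_eq_iff)
    have "Im (expval (rho_bloch rx rz) v) = 0"
      unfolding expval2 bloch_entries v1 v2 by (simp add: algebra_simps) (simp add: field_simps)
    moreover have "Re (expval (rho_bloch rx rz) v)
       = ((1+rz)/2 * s1^2 + (1-rz)/2 * u1^2 + 2*(rx/2) * s1 * u1) + ((1+rz)/2 * t^2 + (1-rz)/2 * w^2 + 2*(rx/2)*t*w)"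
      unfolding expval2 bloch_entries v1 v2 by (simp add: algebra_simps power2_eq_square) (simp add: field_simps)
    moreover have "(rx/2)^2 \<le> (1+rz)/2 * ((1-rz)/2)" using assms by (simp add: power_divide algebra_simps power2_eq_square)
    ultimately show ?thesis using rzb
      quad_nonneg[of "(1+rz)/2" "(1-rz)/2" "rx/2" s1 u1] quad_nonneg[of "(1+rz)/2" "(1-rz)/2" "rx/2" t w]
      by simp
  qed
  have tr: "trace2 (rho_bloch rx rz) = 1" unfolding tr2 bloch_entries
    by (simp add: complex_eq_iff field_simps)
  show ?thesis unfolding density_def using herm pos tr by blast
qed

theorem mainTheorem6:
  fixes \<delta> :: real
  assumes "0 \<le> \<delta>" and "\<delta> \<le> 1/2"
  defines "rx \<equiv> (1 - 2*\<delta>) / sqrt (2 + 8*\<delta>^2)"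
      and "rz \<equiv> (1 + 2*\<delta>) / sqrt (2 + 8*\<delta>^2)"
  shows "(\<forall>q \<rho>. q 0 \<ge> 0 \<and> q 1 \<ge> 0 \<and> q 0 + q 1 = 1 \<and> density (\<rho> 0) \<and> density (\<rho> 1)
            \<longrightarrow> win_prob \<delta> q \<rho> \<le> opt_value \<delta>)
       \<and> density (rho_bloch rx rz)
       \<and> win_prob \<delta> (\<lambda>b. if b = 0 then 1 else 0) (\<lambda>_. rho_bloch rx rz) = opt_value \<delta>
       \<and> opt_value 0 = 1/2 \<and> opt_value (1/2) = 1"
proof -
  define p where "p = 1/2 + \<delta>"
  define r where "r = 1/2 - \<delta>"
  define S where "S = sqrt (p^2 + r^2)"
  have p0: "p > 0" using assms(1) p_def by simp
  have pr2: "p^2 + r^2 = (1 + 4*\<delta>^2)/2" unfolding p_def r_def by (simp add: algebra_simps power2_eq_square)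
  have optS: "opt_value \<delta> = 1/2 + \<delta> * S" unfolding opt_value_def S_def pr2 ..
  have part1: "win_prob \<delta> q \<rho> \<le> opt_value \<delta>"
    if q0: "q 0 \<ge> 0" and q1: "q 1 \<ge> 0" and qs: "q 0 + q 1 = 1"
      and d0: "density (\<rho> 0)" and d1: "density (\<rho> 1)" for q \<rho>
  proof -
    note f0 = dens_facts[OF d0] and f1 = dens_facts[OF d1]
    define K0 where "K0 = p * (Re (\<rho> 0$1$1) - Re (\<rho> 0$2$2)) + 2*r*Re (\<rho> 0$1$2)"
    define K1 where "K1 = p * (Re (\<rho> 1$1$1) - Re (\<rho> 1$2$2)) + 2*r*Re (\<rho> 1$1$2)"
    have k0: "K0 \<le> S" unfolding K0_def
      by (rule key_bound(1)[OF p0 S_def f0(1)]) (rule f0(3))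
    have k1: "- S \<le> K1" unfolding K1_def
      by (rule key_bound(2)[OF p0 S_def f1(1)]) (rule f1(3))
    have e0: "Re (\<rho> 0$2$2) = 1 - Re (\<rho> 0$1$1)" using f0(1) by simp
    have e1: "Re (\<rho> 1$2$2) = 1 - Re (\<rho> 1$1$1)" using f1(1) by simp
    have w: "win_prob \<delta> q \<rho> = q 0 * (1/2 + \<delta> * K0) + q 1 * (1/2 - \<delta> * K1)"
      unfolding win_expand probs K0_def K1_def e0 e1 f0(2) f1(2) p_def r_def
      by (simp add: field_simps)
    have a0: "\<delta> * K0 \<le> \<delta> * S" using mult_left_mono[OF k0 assms(1)] by simp
    have a1: "- (\<delta> * K1) \<le> \<delta> * S" using mult_left_mono[OF k1 assms(1)] by simp
    have "q 0 * (1/2 + \<delta> * K0) \<le> q 0 * (1/2 + \<delta> * S)" using a0 q0 by (simp add: mult_left_mono)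
    moreover have "q 1 * (1/2 - \<delta> * K1) \<le> q 1 * (1/2 + \<delta> * S)" using a1 q1 by (simp add: mult_left_mono)
    ultimately have "win_prob \<delta> q \<rho> \<le> (q 0 + q 1) * (1/2 + \<delta> * S)" unfolding w by (simp add: algebra_simps)
    then show ?thesis using qs optS by simp
  qed
  define T where "T = 1 + 4*\<delta>^2"
  have T0: "T > 0" unfolding T_def by (simp add: add_pos_nonneg)
  have sq: "sqrt (2 + 8*\<delta>^2) = sqrt (2*T)" unfolding T_def by simp
  have sqpos: "sqrt (2*T) > 0" using T0 by simp
  have sq2: "(sqrt (2*T))^2 = 2*T" using T0 by simp
  have rxrz: "rx^2 + rz^2 = 1"
  proof -
    have "rx^2 + rz^2 = ((1 - 2*\<delta>)^2 + (1 + 2*\<delta>)^2) / (sqrt (2*T))^2"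
      unfolding rx_def rz_def sq
      by (metis (no_types) power_divide add_divide_distrib)
    also have "\<dots> = 1" unfolding sq2 using T0 unfolding T_def by (simp add: algebra_simps power2_eq_square)
    finally show ?thesis .
  qed
  have dens: "density (rho_bloch rx rz)" by (rule bloch_density[OF rxrz])
  have "p * rz + r * rx = T / sqrt (2*T)"
    unfolding rx_def rz_def sq p_def r_def T_def using sqpos[unfolded T_def]
    by (simp add: field_simps power2_eq_square)
  also have "\<dots> = S"
  proof -
    have "sqrt (T/2) * sqrt (2*T) = T" using T0 by (simp flip: real_sqrt_mult add: power2_eq_square[symmetric])
    then show ?thesis unfolding S_def pr2 T_def[symmetric] using sqpos by (simp add: field_simps)
  qed
  finally have prS: "p * rz + r * rx = S" .
  have win: "win_prob \<delta> (\<lambda>b. if b = 0 then 1 else 0) (\<lambda>_. rho_bloch rx rz) = 1/2 + \<delta> * (p * rz + r * rx)"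
    unfolding win_expand probs bloch_entries p_def r_def
    by (simp add: field_simps)
  have o1: "opt_value (1/2) = 1" unfolding opt_value_def by (simp add: power2_eq_square)
  have o0: "opt_value 0 = 1/2" unfolding opt_value_def by simp
  show ?thesis
    using part1 dens win prS optS o0 o1 by auto
qed

end
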